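(* The real form $$O'_{(4,1)}(x,y,z,w)=w^8+x^4y^2z^2+y^4x^2z^2+z^4x^2y^2-4x^2y^2z^2w^2$$ is an extremal element of $\mathcal P_{4,8}$.
   Context: $\mathcal P_{n,m}$ denotes the convex cone of all positive semidefinite real forms in $n$ variables of degree $m$. A form $F\in\mathcal P_{n,m}$ is extremal if $F=F_1+F_2$ with $F_1,F_2\in\mathcal P_{n,m}$ implies $F_i=\lambda_iF$ for some nonnegative reals $\lambda_i$. *)

theory Defs
  imports Complex_Main
begin

text \<open>Real forms in the 4 variables x,y,z,w, represented as polynomial functions
  (over the reals a polynomial function determines its coefficients).\<close>

type_synonym form4 = "real \<Rightarrow> real \<Rightarrow> real \<Rightarrow> real \<Rightarrow> real"

definition is_form4 :: "nat \<Rightarrow> form4 \<Rightarrow> bool" where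
  "is_form4 m F \<longleftrightarrow>
     (\<exists>coef :: nat \<Rightarrow> nat \<Rightarrow> nat \<Rightarrow> nat \<Rightarrow> real.
        \<forall>x y z w. F x y z w =
          (\<Sum>a\<le>m. \<Sum>b\<le>m. \<Sum>c\<le>m. \<Sum>d\<le>m.
             if a + b + c + d = m then coef a b c d * x ^ a * y ^ b * z ^ c * w ^ d else 0))"

definition P4 :: "nat \<Rightarrow> form4 set" where
  "P4 m = {F. is_form4 m F \<and> (\<forall>x y z w. F x y z w \<ge> 0)}"

definition extremal_in :: "form4 set \<Rightarrow> form4 \<Rightarrow> bool" where
  "extremal_in C F \<longleftrightarrow> F \<in> C \<and>
     (\<forall>F1\<in>C. \<forall>F2\<in>C. F = (\<lambda>x y z w. F1 x y z w + F2 x y z w) \<longrightarrow>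
        (\<exists>l1 l2 :: real. l1 \<ge> 0 \<and> l2 \<ge> 0 \<and>
           F1 = (\<lambda>x y z w. l1 * F x y z w) \<and> F2 = (\<lambda>x y z w. l2 * F x y z w)))"

definition O41' :: form4 where
  "O41' = (\<lambda>x y z w. w^8 + x^4*y^2*z^2 + y^4*x^2*z^2 + z^4*x^2*y^2 - 4*x^2*y^2*z^2*w^2)"

end

theory Submission
  imports Defs
begin

definition NS :: "(nat\<Rightarrow>nat\<Rightarrow>nat\<Rightarrow>nat\<Rightarrow>real) \<Rightarrow> form4" where
"NS D x y z w = (\<Sum>a\<le>8. \<Sum>b\<le>8. \<Sum>c\<le>8. \<Sum>d\<le>8. D a b c d * x^a*y^b*z^c*w^d)"

lemma poly1_zero:
  fixes c :: "nat \<Rightarrow> real"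
  assumes "\<And>x. (\<Sum>i\<le>n. c i * x^i) = 0" "i \<le> n" shows "c i = 0"
  using polyfun_eq_0[where n=n and c=c] assms by auto

lemma NS_zero:
  assumes "\<And>x y z w. NS D x y z w = 0" "a \<le> 8" "b \<le> 8" "c \<le> 8" "d \<le> 8"
  shows "D a b c d = 0"
proof -
  have 1: "(\<Sum>b\<le>8. \<Sum>c\<le>8. \<Sum>d\<le>8. D a b c d * y^b*z^c*w^d) = 0" if "a \<le> 8" for a y z w
  proof (rule poly1_zero[OF _ that])
    fix x
    have "NS D x y z w = (\<Sum>a\<le>8. (\<Sum>b\<le>8. \<Sum>c\<le>8. \<Sum>d\<le>8. D a b c d * y^b*z^c*w^d) * x^a)"
      unfolding NS_def by (simp add: sum_distrib_left sum_distrib_right mult_ac)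
    then show "(\<Sum>a\<le>8. (\<Sum>b\<le>8. \<Sum>c\<le>8. \<Sum>d\<le>8. D a b c d * y^b*z^c*w^d) * x^a) = 0"
      using assms(1) by simp
  qed
  have 2: "(\<Sum>c\<le>8. \<Sum>d\<le>8. D a b c d * z^c*w^d) = 0" if "a \<le> 8" "b \<le> 8" for a b z w
  proof (rule poly1_zero[OF _ that(2)])
    fix y
    have "(\<Sum>b\<le>8. \<Sum>c\<le>8. \<Sum>d\<le>8. D a b c d * y^b*z^c*w^d) = (\<Sum>b\<le>8. (\<Sum>c\<le>8. \<Sum>d\<le>8. D a b c d * z^c*w^d) * y^b)"
      by (simp add: sum_distrib_left sum_distrib_right mult_ac)
    then show "(\<Sum>b\<le>8. (\<Sum>c\<le>8. \<Sum>d\<le>8. D a b c d * z^c*w^d) * y^b) = 0"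
      using 1[OF that(1)] by simp
  qed
  have 3: "(\<Sum>d\<le>8. D a b c d * w^d) = 0" if "a \<le> 8" "b \<le> 8" "c \<le> 8" for a b c w
  proof (rule poly1_zero[OF _ that(3)])
    fix z
    have "(\<Sum>c\<le>8. \<Sum>d\<le>8. D a b c d * z^c*w^d) = (\<Sum>c\<le>8. (\<Sum>d\<le>8. D a b c d * w^d) * z^c)"
      by (simp add: sum_distrib_left sum_distrib_right mult_ac)
    then show "(\<Sum>c\<le>8. (\<Sum>d\<le>8. D a b c d * w^d) * z^c) = 0"
      using 2[OF that(1,2)] by simp
  qed
  show ?thesis using poly1_zero[OF 3[OF assms(2,3,4)] assms(5)] .
qed

lemma swap5:
  fixes g :: "nat\<Rightarrow>nat\<Rightarrow>nat\<Rightarrow>nat\<Rightarrow>nat\<Rightarrow>real"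
  shows "(\<Sum>j\<in>J. \<Sum>a\<in>A. \<Sum>b\<in>B. \<Sum>c\<in>C. \<Sum>d\<in>E. g j a b c d) = (\<Sum>a\<in>A. \<Sum>b\<in>B. \<Sum>c\<in>C. \<Sum>d\<in>E. \<Sum>j\<in>J. g j a b c d)"
proof -
  have "(\<Sum>j\<in>J. \<Sum>a\<in>A. \<Sum>b\<in>B. \<Sum>c\<in>C. \<Sum>d\<in>E. g j a b c d) = (\<Sum>a\<in>A. \<Sum>j\<in>J. \<Sum>b\<in>B. \<Sum>c\<in>C. \<Sum>d\<in>E. g j a b c d)"
    by (rule sum.swap)
  also have "\<dots> = (\<Sum>a\<in>A. \<Sum>b\<in>B. \<Sum>j\<in>J. \<Sum>c\<in>C. \<Sum>d\<in>E. g j a b c d)"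
    by (rule sum.cong[OF refl], rule sum.swap)
  also have "\<dots> = (\<Sum>a\<in>A. \<Sum>b\<in>B. \<Sum>c\<in>C. \<Sum>j\<in>J. \<Sum>d\<in>E. g j a b c d)"
    by (rule sum.cong[OF refl], rule sum.cong[OF refl], rule sum.swap)
  also have "\<dots> = (\<Sum>a\<in>A. \<Sum>b\<in>B. \<Sum>c\<in>C. \<Sum>d\<in>E. \<Sum>j\<in>J. g j a b c d)"
    by (rule sum.cong[OF refl], rule sum.cong[OF refl], rule sum.cong[OF refl], rule sum.swap)
  finally show ?thesis .
qed

lemma NS_weight:
  "NS D (t^p*x) (t^q*y) (t^r*z) (t^s*w) =
   (\<Sum>j\<le>8*(p+q+r+s). t^j * NS (\<lambda>a b c d. if p*a+q*b+r*c+s*d = j then D a b c d else 0) x y z w)"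
proof -
  let ?K = "8*(p+q+r+s)"
  have inner: "D a b c d * (t^p*x)^a*(t^q*y)^b*(t^r*z)^c*(t^s*w)^d =
     (\<Sum>j\<le>?K. t^j * ((if p*a+q*b+r*c+s*d = j then D a b c d else 0) * x^a*y^b*z^c*w^d))"
    if "a \<le> 8" "b \<le> 8" "c \<le> 8" "d \<le> 8" for a b c d
  proof -
    have le: "p*a+q*b+r*c+s*d \<le> ?K"
    proof -
      have "p*a \<le> 8*p" "q*b \<le> 8*q" "r*c \<le> 8*r" "s*d \<le> 8*s" using that by (simp_all add: mult.commute)
      then show ?thesis unfolding distrib_left by linarith
    qed
    have "(\<Sum>j\<le>?K. t^j * ((if p*a+q*b+r*c+s*d = j then D a b c d else 0) * x^a*y^b*z^c*w^d))
       = (\<Sum>j\<le>?K. if j = p*a+q*b+r*c+s*d then t^(p*a+q*b+r*c+s*d) * (D a b c d * x^a*y^b*z^c*w^d) else 0)"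
      by (rule sum.cong) auto
    also have "\<dots> = t^(p*a+q*b+r*c+s*d) * (D a b c d * x^a*y^b*z^c*w^d)"
      using le by (simp add: sum.delta)
    also have "\<dots> = D a b c d * (t^p*x)^a*(t^q*y)^b*(t^r*z)^c*(t^s*w)^d"
      by (simp add: power_mult_distrib power_add power_mult[symmetric] mult_ac)
    finally show ?thesis by simp
  qed
  have "NS D (t^p*x) (t^q*y) (t^r*z) (t^s*w) =
    (\<Sum>a\<le>8. \<Sum>b\<le>8. \<Sum>c\<le>8. \<Sum>d\<le>8. \<Sum>j\<le>?K. t^j * ((if p*a+q*b+r*c+s*d = j then D a b c d else 0) * x^a*y^b*z^c*w^d))"
    unfolding NS_def by (intro sum.cong refl) (simp add: inner)
  also have "\<dots> = (\<Sum>j\<le>?K. \<Sum>a\<le>8. \<Sum>b\<le>8. \<Sum>c\<le>8. \<Sum>d\<le>8. t^j * ((if p*a+q*b+r*c+s*d = j then D a b c d else 0) * x^a*y^b*z^c*w^d))"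
    by (rule swap5[symmetric])
  also have "\<dots> = (\<Sum>j\<le>?K. t^j * NS (\<lambda>a b c d. if p*a+q*b+r*c+s*d = j then D a b c d else 0) x y z w)"
    unfolding NS_def by (simp add: sum_distrib_left mult_ac)
  finally show ?thesis .
qed


lemma order_lemma:
  fixes e :: "nat \<Rightarrow> real"
  assumes bnd: "\<And>t. 0 < t \<Longrightarrow> t \<le> 1 \<Longrightarrow> \<bar>\<Sum>j\<le>n. e j * t^j\<bar> \<le> M * t^k"
  shows "j < k \<Longrightarrow> j \<le> n \<Longrightarrow> e j = 0"
proof (induction j rule: less_induct)
  case (less j)
  have M: "M \<ge> 0" using bnd[of 1] by simp
  define g where "g t = (\<Sum>i\<le>n. e i * t^(i-j))" for t :: real
  have eq: "(\<Sum>i\<le>n. e i * t^i) = t^j * g t" for t :: real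
  proof -
    have "(\<Sum>i\<le>n. e i * t^i) = (\<Sum>i\<le>n. t^j * (e i * t^(i-j)))"
    proof (rule sum.cong[OF refl])
      fix i assume "i \<in> {..n}"
      show "e i * t^i = t^j * (e i * t^(i-j))"
      proof (cases "i < j")
        case True then show ?thesis using less.IH[of i] less.prems by simp
      next
        case False then have "t^i = t^j * t^(i-j)" by (simp add: power_add[symmetric])
        then show ?thesis by simp
      qed
    qed
    then show ?thesis by (simp add: g_def sum_distrib_left)
  qed
  have g0: "g 0 = e j"
  proof -
    have "g 0 = (\<Sum>i\<le>n. if i = j then e j else 0)"
      unfolding g_def
    proof (rule sum.cong[OF refl])
      fix i assume i: "i \<in> {..n}"
      show "e i * 0^(i-j) = (if i = j then e j else 0)"
      proof (cases "i < j")
        case True then show ?thesis using less.IH[of i] less.prems by simp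
      next
        case False then show ?thesis by auto
      qed
    qed
    then show ?thesis using less.prems by simp
  qed
  have cont: "(g \<longlongrightarrow> g 0) (at_right 0)"
    unfolding g_def by (intro tendsto_intros)
  have small: "\<bar>g t\<bar> \<le> M * t" if "0 < t" "t \<le> 1" for t
  proof -
    have A: "t^j * \<bar>g t\<bar> \<le> M * t^k" using bnd[OF that] eq[of t] that by (simp add: abs_mult)
    obtain m where m: "k - j = Suc m" using less.prems by (metis Suc_diff_Suc)
    have kk: "t^k = t^j * t^(k-j)" using less.prems by (simp add: power_add[symmetric])
    have "t^(k-j) = t * t^m" using m by simp
    moreover have "t^m \<le> 1" using that by (simp add: power_le_one)
    ultimately have "t^(k-j) \<le> t" using that by (simp add: mult_left_le)
    then have "M * t^(k-j) \<le> M * t" using M by (rule mult_left_mono)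
    then have "t^j * (M * t^(k-j)) \<le> t^j * (M * t)" using that by (simp add: mult_left_mono)
    then have "t^j * \<bar>g t\<bar> \<le> t^j * (M * t)" using A kk by (simp add: mult_ac)
    then show ?thesis using that by (simp add: mult_le_cancel_left_pos)
  qed
  have ev: "\<forall>\<^sub>F t in at_right 0. \<bar>g t\<bar> \<le> M * t"
    unfolding eventually_at_right_field
    by (intro exI[of _ 1]) (auto intro: small)
  have lim0: "(g \<longlongrightarrow> 0) (at_right 0)"
  proof (rule tendsto_sandwich[where f="\<lambda>t. - (M*t)" and h="\<lambda>t. M*t"])
    show "\<forall>\<^sub>F t in at_right 0. - (M * t) \<le> g t"
      using ev by eventually_elim linarith
    show "\<forall>\<^sub>F t in at_right 0. g t \<le> M * t"
      using ev by eventually_elim linarith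
    show "((\<lambda>t. - (M * t)) \<longlongrightarrow> 0) (at_right 0)"
      by (auto intro!: tendsto_eq_intros)
    show "((\<lambda>t. M * t) \<longlongrightarrow> 0) (at_right 0)"
      by (auto intro!: tendsto_eq_intros)
  qed
  have "g 0 = 0" using tendsto_unique[OF _ cont lim0] by simp
  then show ?case using g0 by simp
qed


definition S15 :: "(nat\<times>nat\<times>nat\<times>nat) set" where
  "S15 = {(0,0,0,8), (1,1,1,5), (1,1,2,4), (1,2,1,4), (2,1,1,4), (2,2,2,2), (2,2,3,1), (2,2,4,0), (2,3,2,1), (2,3,3,0), (2,4,2,0), (3,2,2,1), (3,2,3,0), (3,3,2,0), (4,2,2,0)}"

lemma supp_arith:
  assumes "a+b+c+d = (8::nat)" "8 \<le> 4*a+d" "8 \<le> 4*b+d" "8 \<le> 4*c+d"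
  shows "(a,b,c,d) \<in> S15"
proof -
  have "d \<le> 8" using assms by simp
  then have "d \<in> {0,1,2,3,4,5,6,7,8}" by auto
  then show ?thesis using assms unfolding S15_def by (elim insertE; simp; presburger)
qed

lemma nested_prod:
  "(\<Sum>a\<in>A. \<Sum>b\<in>B. \<Sum>c\<in>C. \<Sum>d\<in>E. f a b c d) = (\<Sum>(a,b,c,d)\<in>A\<times>B\<times>C\<times>E. f a b c d)"
  by (simp add: sum.cartesian_product)

lemma NS_support:
  assumes "\<And>a b c d. a\<le>8 \<Longrightarrow> b\<le>8 \<Longrightarrow> c\<le>8 \<Longrightarrow> d\<le>8 \<Longrightarrow> (a,b,c,d) \<notin> S15 \<Longrightarrow> D a b c d = 0"
  shows "NS D x y z w = (\<Sum>(a,b,c,d)\<in>S15. D a b c d * x^a*y^b*z^c*w^d)"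
proof -
  have sub: "S15 \<subseteq> {..8::nat}\<times>{..8::nat}\<times>{..8::nat}\<times>{..8::nat}" unfolding S15_def by auto
  have "NS D x y z w = (\<Sum>(a,b,c,d)\<in>{..8::nat}\<times>{..8::nat}\<times>{..8::nat}\<times>{..8::nat}. D a b c d * x^a*y^b*z^c*w^d)"
    unfolding NS_def by (rule nested_prod)
  also have "\<dots> = (\<Sum>(a,b,c,d)\<in>S15. D a b c d * x^a*y^b*z^c*w^d)"
    by (rule sum.mono_neutral_right[OF _ sub]) (auto simp: assms)
  finally show ?thesis .
qed

definition E :: "(nat \<Rightarrow> real) \<Rightarrow> form4" where
  "E k = (\<lambda>x y z w. k 0 * w^8 + k 1 * x*y*z*w^5 + k 2 * x*y*z^2*w^4 + k 3 * x*y^2*z*w^4 + k 4 * x^2*y*z*w^4 + k 5 * x^2*y^2*z^2*w^2 + k 6 * x^2*y^2*z^3*w + k 7 * x^2*y^2*z^4 + k 8 * x^2*y^3*z^2*w + k 9 * x^2*y^3*z^3 + k 10 * x^2*y^4*z^2 + k 11 * x^3*y^2*z^2*w + k 12 * x^3*y^2*z^3 + k 13 * x^3*y^3*z^2 + k 14 * x^4*y^2*z^2)"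

lemma deriv0:
  fixes f :: "real \<Rightarrow> real"
  assumes "\<And>t. 0 \<le> f t" "f 0 = 0" "(f has_real_derivative l) (at 0)"
  shows "l = 0"
  using DERIV_local_min[OF assms(3), of 1] assms(1,2) by auto

lemma lin_alg:
  assumes nn: "\<And>x y z w. 0 \<le> E k x y z w"
    and v0: "E k 1 1 1 1 = 0"
    and v1: "E k 1 1 (-1) 1 = 0"
    and v2: "E k 1 (-1) 1 1 = 0"
    and v3: "E k 1 (-1) (-1) 1 = 0"
    and v4: "E k (-1) 1 1 1 = 0"
    and v5: "E k (-1) 1 (-1) 1 = 0"
    and v6: "E k (-1) (-1) 1 1 = 0"
    and v7: "E k (-1) (-1) (-1) 1 = 0"
  shows "E k x y z w = k 0 * O41' x y z w"
proof -
  have e0: "1 * k 0 + 1 * k 1 + 1 * k 2 + 1 * k 3 + 1 * k 4 + 1 * k 5 + 1 * k 6 + 1 * k 7 + 1 * k 8 + 1 * k 9 + 1 * k 10 + 1 * k 11 + 1 * k 12 + 1 * k 13 + 1 * k 14 = 0" using v0 by (simp add: E_def)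
  have e1: "1 * k 0 + (-1) * k 1 + 1 * k 2 + (-1) * k 3 + (-1) * k 4 + 1 * k 5 + (-1) * k 6 + 1 * k 7 + 1 * k 8 + (-1) * k 9 + 1 * k 10 + 1 * k 11 + (-1) * k 12 + 1 * k 13 + 1 * k 14 = 0" using v1 by (simp add: E_def)
  have e2: "1 * k 0 + (-1) * k 1 + (-1) * k 2 + 1 * k 3 + (-1) * k 4 + 1 * k 5 + 1 * k 6 + 1 * k 7 + (-1) * k 8 + (-1) * k 9 + 1 * k 10 + 1 * k 11 + 1 * k 12 + (-1) * k 13 + 1 * k 14 = 0" using v2 by (simp add: E_def)
  have e3: "1 * k 0 + 1 * k 1 + (-1) * k 2 + (-1) * k 3 + 1 * k 4 + 1 * k 5 + (-1) * k 6 + 1 * k 7 + (-1) * k 8 + 1 * k 9 + 1 * k 10 + 1 * k 11 + (-1) * k 12 + (-1) * k 13 + 1 * k 14 = 0" using v3 by (simp add: E_def)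
  have e4: "1 * k 0 + (-1) * k 1 + (-1) * k 2 + (-1) * k 3 + 1 * k 4 + 1 * k 5 + 1 * k 6 + 1 * k 7 + 1 * k 8 + 1 * k 9 + 1 * k 10 + (-1) * k 11 + (-1) * k 12 + (-1) * k 13 + 1 * k 14 = 0" using v4 by (simp add: E_def)
  have e5: "1 * k 0 + 1 * k 1 + (-1) * k 2 + 1 * k 3 + (-1) * k 4 + 1 * k 5 + (-1) * k 6 + 1 * k 7 + 1 * k 8 + (-1) * k 9 + 1 * k 10 + (-1) * k 11 + 1 * k 12 + (-1) * k 13 + 1 * k 14 = 0" using v5 by (simp add: E_def)
  have e6: "1 * k 0 + 1 * k 1 + 1 * k 2 + (-1) * k 3 + (-1) * k 4 + 1 * k 5 + 1 * k 6 + 1 * k 7 + (-1) * k 8 + (-1) * k 9 + 1 * k 10 + (-1) * k 11 + (-1) * k 12 + 1 * k 13 + 1 * k 14 = 0" using v6 by (simp add: E_def)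
  have e7: "1 * k 0 + (-1) * k 1 + 1 * k 2 + 1 * k 3 + 1 * k 4 + 1 * k 5 + (-1) * k 6 + 1 * k 7 + (-1) * k 8 + 1 * k 9 + 1 * k 10 + (-1) * k 11 + 1 * k 12 + 1 * k 13 + 1 * k 14 = 0" using v7 by (simp add: E_def)
  have "((\<lambda>t. E k (1+t) 1 1 1) has_real_derivative (1 * k 1 + 1 * k 2 + 1 * k 3 + 2 * k 4 + 2 * k 5 + 2 * k 6 + 2 * k 7 + 2 * k 8 + 2 * k 9 + 2 * k 10 + 3 * k 11 + 3 * k 12 + 3 * k 13 + 4 * k 14)) (at 0)"
    unfolding E_def by (auto intro!: derivative_eq_intros)
  then have d0: "1 * k 1 + 1 * k 2 + 1 * k 3 + 2 * k 4 + 2 * k 5 + 2 * k 6 + 2 * k 7 + 2 * k 8 + 2 * k 9 + 2 * k 10 + 3 * k 11 + 3 * k 12 + 3 * k 13 + 4 * k 14 = 0"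
    by (rule deriv0[rotated 2]) (simp_all add: nn v0)
  have "((\<lambda>t. E k 1 (1+t) 1 1) has_real_derivative (1 * k 1 + 1 * k 2 + 2 * k 3 + 1 * k 4 + 2 * k 5 + 2 * k 6 + 2 * k 7 + 3 * k 8 + 3 * k 9 + 4 * k 10 + 2 * k 11 + 2 * k 12 + 3 * k 13 + 2 * k 14)) (at 0)"
    unfolding E_def by (auto intro!: derivative_eq_intros)
  then have d1: "1 * k 1 + 1 * k 2 + 2 * k 3 + 1 * k 4 + 2 * k 5 + 2 * k 6 + 2 * k 7 + 3 * k 8 + 3 * k 9 + 4 * k 10 + 2 * k 11 + 2 * k 12 + 3 * k 13 + 2 * k 14 = 0"
    by (rule deriv0[rotated 2]) (simp_all add: nn v0)
  have "((\<lambda>t. E k 1 1 (1+t) 1) has_real_derivative (1 * k 1 + 2 * k 2 + 1 * k 3 + 1 * k 4 + 2 * k 5 + 3 * k 6 + 4 * k 7 + 2 * k 8 + 3 * k 9 + 2 * k 10 + 2 * k 11 + 3 * k 12 + 2 * k 13 + 2 * k 14)) (at 0)"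
    unfolding E_def by (auto intro!: derivative_eq_intros)
  then have d2: "1 * k 1 + 2 * k 2 + 1 * k 3 + 1 * k 4 + 2 * k 5 + 3 * k 6 + 4 * k 7 + 2 * k 8 + 3 * k 9 + 2 * k 10 + 2 * k 11 + 3 * k 12 + 2 * k 13 + 2 * k 14 = 0"
    by (rule deriv0[rotated 2]) (simp_all add: nn v0)
  have "((\<lambda>t. E k (1+t) 1 (-1) 1) has_real_derivative ((-1) * k 1 + 1 * k 2 + (-1) * k 3 + (-2) * k 4 + 2 * k 5 + (-2) * k 6 + 2 * k 7 + 2 * k 8 + (-2) * k 9 + 2 * k 10 + 3 * k 11 + (-3) * k 12 + 3 * k 13 + 4 * k 14)) (at 0)"
    unfolding E_def by (auto intro!: derivative_eq_intros)
  then have d3: "(-1) * k 1 + 1 * k 2 + (-1) * k 3 + (-2) * k 4 + 2 * k 5 + (-2) * k 6 + 2 * k 7 + 2 * k 8 + (-2) * k 9 + 2 * k 10 + 3 * k 11 + (-3) * k 12 + 3 * k 13 + 4 * k 14 = 0"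
    by (rule deriv0[rotated 2]) (simp_all add: nn v1)
  have "((\<lambda>t. E k 1 (1+t) (-1) 1) has_real_derivative ((-1) * k 1 + 1 * k 2 + (-2) * k 3 + (-1) * k 4 + 2 * k 5 + (-2) * k 6 + 2 * k 7 + 3 * k 8 + (-3) * k 9 + 4 * k 10 + 2 * k 11 + (-2) * k 12 + 3 * k 13 + 2 * k 14)) (at 0)"
    unfolding E_def by (auto intro!: derivative_eq_intros)
  then have d4: "(-1) * k 1 + 1 * k 2 + (-2) * k 3 + (-1) * k 4 + 2 * k 5 + (-2) * k 6 + 2 * k 7 + 3 * k 8 + (-3) * k 9 + 4 * k 10 + 2 * k 11 + (-2) * k 12 + 3 * k 13 + 2 * k 14 = 0"
    by (rule deriv0[rotated 2]) (simp_all add: nn v1)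
  have "((\<lambda>t. E k (1+t) (-1) 1 1) has_real_derivative ((-1) * k 1 + (-1) * k 2 + 1 * k 3 + (-2) * k 4 + 2 * k 5 + 2 * k 6 + 2 * k 7 + (-2) * k 8 + (-2) * k 9 + 2 * k 10 + 3 * k 11 + 3 * k 12 + (-3) * k 13 + 4 * k 14)) (at 0)"
    unfolding E_def by (auto intro!: derivative_eq_intros)
  then have d5: "(-1) * k 1 + (-1) * k 2 + 1 * k 3 + (-2) * k 4 + 2 * k 5 + 2 * k 6 + 2 * k 7 + (-2) * k 8 + (-2) * k 9 + 2 * k 10 + 3 * k 11 + 3 * k 12 + (-3) * k 13 + 4 * k 14 = 0"
    by (rule deriv0[rotated 2]) (simp_all add: nn v2)
  have "8 * k 1 = 0 * k 0 + ((1) * (1 * k 0 + 1 * k 1 + 1 * k 2 + 1 * k 3 + 1 * k 4 + 1 * k 5 + 1 * k 6 + 1 * k 7 + 1 * k 8 + 1 * k 9 + 1 * k 10 + 1 * k 11 + 1 * k 12 + 1 * k 13 + 1 * k 14) + (-1) * (1 * k 0 + (-1) * k 1 + 1 * k 2 + (-1) * k 3 + (-1) * k 4 + 1 * k 5 + (-1) * k 6 + 1 * k 7 + 1 * k 8 + (-1) * k 9 + 1 * k 10 + 1 * k 11 + (-1) * k 12 + 1 * k 13 + 1 * k 14) + (-1) * (1 * k 0 + (-1) * k 1 + (-1) * k 2 + 1 * k 3 + (-1) * k 4 + 1 * k 5 + 1 * k 6 + 1 * k 7 + (-1) * k 8 + (-1) * k 9 + 1 * k 10 + 1 * k 11 +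 1 * k 12 + (-1) * k 13 + 1 * k 14) + (1) * (1 * k 0 + 1 * k 1 + (-1) * k 2 + (-1) * k 3 + 1 * k 4 + 1 * k 5 + (-1) * k 6 + 1 * k 7 + (-1) * k 8 + 1 * k 9 + 1 * k 10 + 1 * k 11 + (-1) * k 12 + (-1) * k 13 + 1 * k 14) + (-1) * (1 * k 0 + (-1) * k 1 + (-1) * k 2 + (-1) * k 3 + 1 * k 4 + 1 * k 5 + 1 * k 6 + 1 * k 7 + 1 * k 8 + 1 * k 9 + 1 * k 10 + (-1) * k 11 + (-1) * k 12 + (-1) * k 13 + 1 * k 14) + (1) * (1 * k 0 + 1 * k 1 + (-1) * k 2 + 1 * k 3 + (-1) * k 4 + 1 * k 5 + (-1) * k 6 + 1 * k 7 + 1 * k 8 + (-1) * k 9 + 1 * k 10 + (-1) * k 11 + 1 * k 12 + (-1) * k 13 + 1 * k 14) + (1) * (1 * k 0 + 1 * k 1 + 1 * k 2 + (-1) * k 3 + (-1) * k 4 + 1 * k 5 + 1 * k 6 + 1 * k 7 + (-1) * k 8 + (-1) * k 9 + 1 * k 10 + (-1) * k 11 + (-1) * k 12 + 1 * k 13 + 1 * k 14) + (-1) * (1 * k 0 + (-1) * k 1 + 1 * k 2 + 1 * k 3 + 1 * k 4 + 1 * k 5 + (-1) * k 6 + 1 * k 7 + (-1) * k 8 + 1 * k 9 + 1 * k 10 + (-1) * k 11 + 1 * k 12 + 1 * k 13 + 1 * k 14))" by (simp add: algebra_simps)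
  then have s1: "k 1 = 0" by (simp only: e0 e1 e2 e3 e4 e5 e6 e7; simp)
  have "8 * k 2 = 0 * k 0 + ((4) * (1 * k 0 + 1 * k 1 + 1 * k 2 + 1 * k 3 + 1 * k 4 + 1 * k 5 + 1 * k 6 + 1 * k 7 + 1 * k 8 + 1 * k 9 + 1 * k 10 + 1 * k 11 + 1 * k 12 + 1 * k 13 + 1 * k 14) + (1) * (1 * k 0 + (-1) * k 1 + 1 * k 2 + (-1) * k 3 + (-1) * k 4 + 1 * k 5 + (-1) * k 6 + 1 * k 7 + 1 * k 8 + (-1) * k 9 + 1 * k 10 + 1 * k 11 + (-1) * k 12 + 1 * k 13 + 1 * k 14) + (-4) * (1 * k 0 + (-1) * k 1 + (-1) * k 2 + 1 * k 3 + (-1) * k 4 + 1 * k 5 + 1 * k 6 + 1 * k 7 + (-1) * k 8 + (-1) * k 9 + 1 * k 10 + 1 * k 11 + 1 * k 12 + (-1) * k 13 + 1 * k 14) + (-1) * (1 * k 0 + 1 * k 1 + (-1) * k 2 + (-1) * k 3 + 1 * k 4 + 1 * k 5 + (-1) * k 6 + 1 * k 7 + (-1) * k 8 + 1 * k 9 + 1 * k 10 + 1 * k 11 + (-1) * k 12 + (-1) * k 13 + 1 * k 14) + (-1) * (1 * k 0 + 1 * k 1 + (-1) * k 2 + 1 * k 3 + (-1) * k 4 + 1 * k 5 + (-1) * k 6 + 1 * k 7 + 1 * k 8 + (-1) * k 9 + 1 * k 10 + (-1) * k 11 + 1 * k 12 + (-1) * k 13 + 1 * k 14) + (1) * (1 *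 k 0 + (-1) * k 1 + 1 * k 2 + 1 * k 3 + 1 * k 4 + 1 * k 5 + (-1) * k 6 + 1 * k 7 + (-1) * k 8 + 1 * k 9 + 1 * k 10 + (-1) * k 11 + 1 * k 12 + 1 * k 13 + 1 * k 14) + (-2) * (1 * k 1 + 1 * k 2 + 1 * k 3 + 2 * k 4 + 2 * k 5 + 2 * k 6 + 2 * k 7 + 2 * k 8 + 2 * k 9 + 2 * k 10 + 3 * k 11 + 3 * k 12 + 3 * k 13 + 4 * k 14) + (2) * ((-1) * k 1 + (-1) * k 2 + 1 * k 3 + (-2) * k 4 + 2 * k 5 + 2 * k 6 + 2 * k 7 + (-2) * k 8 + (-2) * k 9 + 2 * k 10 + 3 * k 11 + 3 * k 12 + (-3) * k 13 + 4 * k 14))" by (simp add: algebra_simps)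
  then have s2: "k 2 = 0" by (simp only: e0 e1 e2 e3 e5 e7 d0 d5; simp)
  have "8 * k 3 = 0 * k 0 + ((4) * (1 * k 0 + 1 * k 1 + 1 * k 2 + 1 * k 3 + 1 * k 4 + 1 * k 5 + 1 * k 6 + 1 * k 7 + 1 * k 8 + 1 * k 9 + 1 * k 10 + 1 * k 11 + 1 * k 12 + 1 * k 13 + 1 * k 14) + (-4) * (1 * k 0 + (-1) * k 1 + 1 * k 2 + (-1) * k 3 + (-1) * k 4 + 1 * k 5 + (-1) * k 6 + 1 * k 7 + 1 * k 8 + (-1) * k 9 + 1 * k 10 + 1 * k 11 + (-1) * k 12 + 1 * k 13 + 1 * k 14) + (1) * (1 * k 0 + (-1) * k 1 + (-1) * k 2 + 1 * k 3 + (-1) * k 4 + 1 * k 5 + 1 * k 6 + 1 * k 7 + (-1) * k 8 + (-1) * k 9 + 1 * k 10 + 1 * k 11 + 1 * k 12 + (-1) * k 13 + 1 * k 14) + (-1) * (1 * k 0 + 1 * k 1 + (-1) * k 2 + (-1) * k 3 + 1 * k 4 + 1 * k 5 + (-1) * k 6 + 1 * k 7 + (-1) * k 8 + 1 * k 9 + 1 * k 10 + 1 * k 11 + (-1) * k 12 + (-1) * k 13 + 1 * k 14) + (-1) * (1 * k 0 + 1 * k 1 + 1 * k 2 + (-1) * k 3 + (-1) * k 4 + 1 * k 5 + 1 * k 6 + 1 * k 7 + (-1) * k 8 + (-1) * k 9 + 1 * k 10 + (-1) * k 11 + (-1) * k 12 + 1 * k 13 + 1 * k 14) + (1) * (1 *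 k 0 + (-1) * k 1 + 1 * k 2 + 1 * k 3 + 1 * k 4 + 1 * k 5 + (-1) * k 6 + 1 * k 7 + (-1) * k 8 + 1 * k 9 + 1 * k 10 + (-1) * k 11 + 1 * k 12 + 1 * k 13 + 1 * k 14) + (-2) * (1 * k 1 + 1 * k 2 + 1 * k 3 + 2 * k 4 + 2 * k 5 + 2 * k 6 + 2 * k 7 + 2 * k 8 + 2 * k 9 + 2 * k 10 + 3 * k 11 + 3 * k 12 + 3 * k 13 + 4 * k 14) + (2) * ((-1) * k 1 + 1 * k 2 + (-1) * k 3 + (-2) * k 4 + 2 * k 5 + (-2) * k 6 + 2 * k 7 + 2 * k 8 + (-2) * k 9 + 2 * k 10 + 3 * k 11 + (-3) * k 12 + 3 * k 13 + 4 * k 14))" by (simp add: algebra_simps)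
  then have s3: "k 3 = 0" by (simp only: e0 e1 e2 e3 e6 e7 d0 d3; simp)
  have "8 * k 4 = 0 * k 0 + ((4) * (1 * k 0 + 1 * k 1 + 1 * k 2 + 1 * k 3 + 1 * k 4 + 1 * k 5 + 1 * k 6 + 1 * k 7 + 1 * k 8 + 1 * k 9 + 1 * k 10 + 1 * k 11 + 1 * k 12 + 1 * k 13 + 1 * k 14) + (-4) * (1 * k 0 + (-1) * k 1 + 1 * k 2 + (-1) * k 3 + (-1) * k 4 + 1 * k 5 + (-1) * k 6 + 1 * k 7 + 1 * k 8 + (-1) * k 9 + 1 * k 10 + 1 * k 11 + (-1) * k 12 + 1 * k 13 + 1 * k 14) + (1) * (1 * k 0 + (-1) * k 1 + (-1) * k 2 + (-1) * k 3 + 1 * k 4 + 1 * k 5 + 1 * k 6 + 1 * k 7 + 1 * k 8 + 1 * k 9 + 1 * k 10 + (-1) * k 11 + (-1) * k 12 + (-1) * k 13 + 1 * k 14) + (-1) * (1 * k 0 + 1 * k 1 + (-1) * k 2 + 1 * k 3 + (-1) * k 4 + 1 * k 5 + (-1) * k 6 + 1 * k 7 + 1 * k 8 + (-1) * k 9 + 1 * k 10 + (-1) * k 11 + 1 * k 12 + (-1) * k 13 + 1 * k 14) + (-1) * (1 * k 0 + 1 * k 1 + 1 * k 2 + (-1) * k 3 + (-1) * k 4 + 1 * k 5 + 1 * k 6 + 1 * k 7 + (-1) * k 8 + (-1) * k 9 + 1 * k 10 + (-1) * k 11 + (-1) * k 12 + 1 * k 13 + 1 * k 14) + (1) * (1 *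 k 0 + (-1) * k 1 + 1 * k 2 + 1 * k 3 + 1 * k 4 + 1 * k 5 + (-1) * k 6 + 1 * k 7 + (-1) * k 8 + 1 * k 9 + 1 * k 10 + (-1) * k 11 + 1 * k 12 + 1 * k 13 + 1 * k 14) + (-2) * (1 * k 1 + 1 * k 2 + 2 * k 3 + 1 * k 4 + 2 * k 5 + 2 * k 6 + 2 * k 7 + 3 * k 8 + 3 * k 9 + 4 * k 10 + 2 * k 11 + 2 * k 12 + 3 * k 13 + 2 * k 14) + (2) * ((-1) * k 1 + 1 * k 2 + (-2) * k 3 + (-1) * k 4 + 2 * k 5 + (-2) * k 6 + 2 * k 7 + 3 * k 8 + (-3) * k 9 + 4 * k 10 + 2 * k 11 + (-2) * k 12 + 3 * k 13 + 2 * k 14))" by (simp add: algebra_simps)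
  then have s4: "k 4 = 0" by (simp only: e0 e1 e4 e5 e6 e7 d1 d4; simp)
  have "4 * k 5 = -16 * k 0 + ((2) * (1 * k 0 + 1 * k 1 + 1 * k 2 + 1 * k 3 + 1 * k 4 + 1 * k 5 + 1 * k 6 + 1 * k 7 + 1 * k 8 + 1 * k 9 + 1 * k 10 + 1 * k 11 + 1 * k 12 + 1 * k 13 + 1 * k 14) + (8) * (1 * k 0 + (-1) * k 1 + 1 * k 2 + (-1) * k 3 + (-1) * k 4 + 1 * k 5 + (-1) * k 6 + 1 * k 7 + 1 * k 8 + (-1) * k 9 + 1 * k 10 + 1 * k 11 + (-1) * k 12 + 1 * k 13 + 1 * k 14) + (4) * (1 * k 0 + (-1) * k 1 + (-1) * k 2 + 1 * k 3 + (-1) * k 4 + 1 * k 5 + 1 * k 6 + 1 * k 7 + (-1) * k 8 + (-1) * k 9 + 1 * k 10 + 1 * k 11 + 1 * k 12 + (-1) * k 13 + 1 * k 14) + (1) * (1 * k 0 + 1 * k 1 + (-1) * k 2 + (-1) * k 3 + 1 * k 4 + 1 * k 5 + (-1) * k 6 + 1 * k 7 + (-1) * k 8 + 1 * k 9 + 1 * k 10 + 1 * k 11 + (-1) * k 12 + (-1) * k 13 + 1 * k 14) + (1) * (1 * k 0 + 1 * k 1 + (-1) * k 2 + 1 * k 3 + (-1) * k 4 + 1 * k 5 + (-1) * k 6 + 1 * k 7 + 1 * k 8 + (-1) * k 9 + 1 * k 10 + (-1) * k 11 + 1 * k 12 + (-1) * k 13 + 1 * k 14) + (1) * (1 * k 0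 + 1 * k 1 + 1 * k 2 + (-1) * k 3 + (-1) * k 4 + 1 * k 5 + 1 * k 6 + 1 * k 7 + (-1) * k 8 + (-1) * k 9 + 1 * k 10 + (-1) * k 11 + (-1) * k 12 + 1 * k 13 + 1 * k 14) + (-1) * (1 * k 0 + (-1) * k 1 + 1 * k 2 + 1 * k 3 + 1 * k 4 + 1 * k 5 + (-1) * k 6 + 1 * k 7 + (-1) * k 8 + 1 * k 9 + 1 * k 10 + (-1) * k 11 + 1 * k 12 + 1 * k 13 + 1 * k 14) + (2) * (1 * k 1 + 1 * k 2 + 1 * k 3 + 2 * k 4 + 2 * k 5 + 2 * k 6 + 2 * k 7 + 2 * k 8 + 2 * k 9 + 2 * k 10 + 3 * k 11 + 3 * k 12 + 3 * k 13 + 4 * k 14) + (-2) * (1 * k 1 + 2 * k 2 + 1 * k 3 + 1 * k 4 + 2 * k 5 + 3 * k 6 + 4 * k 7 + 2 * k 8 + 3 * k 9 + 2 * k 10 + 2 * k 11 + 3 * k 12 + 2 * k 13 + 2 * k 14) + (-2) * ((-1) * k 1 + 1 * k 2 + (-1) * k 3 + (-2) * k 4 + 2 * k 5 + (-2) * k 6 + 2 * k 7 + 2 * k 8 + (-2) * k 9 + 2 * k 10 + 3 * k 11 + (-3) * k 12 + 3 * k 13 + 4 * k 14) + (-2) * ((-1) * k 1 + 1 * k 2 + (-2) * k 3 + (-1) * k 4 + 2 * k 5 + (-2) * k 6 + 2 * k 7 + 3 * k 8 + (-3) * k 9 + 4 * k 10 + 2 * k 11 + (-2) * k 12 + 3 *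 k 13 + 2 * k 14) + (-2) * ((-1) * k 1 + (-1) * k 2 + 1 * k 3 + (-2) * k 4 + 2 * k 5 + 2 * k 6 + 2 * k 7 + (-2) * k 8 + (-2) * k 9 + 2 * k 10 + 3 * k 11 + 3 * k 12 + (-3) * k 13 + 4 * k 14))" by (simp add: algebra_simps)
  then have s5: "k 5 = -4 * k 0" by (simp only: e0 e1 e2 e3 e5 e6 e7 d0 d2 d3 d4 d5; simp)
  have "8 * k 6 = 0 * k 0 + ((1) * (1 * k 0 + 1 * k 1 + 1 * k 2 + 1 * k 3 + 1 * k 4 + 1 * k 5 + 1 * k 6 + 1 * k 7 + 1 * k 8 + 1 * k 9 + 1 * k 10 + 1 * k 11 + 1 * k 12 + 1 * k 13 + 1 * k 14) + (-1) * (1 * k 0 + (-1) * k 1 + 1 * k 2 + (-1) * k 3 + (-1) * k 4 + 1 * k 5 + (-1) * k 6 + 1 * k 7 + 1 * k 8 + (-1) * k 9 + 1 * k 10 + 1 * k 11 + (-1) * k 12 + 1 * k 13 + 1 * k 14) + (1) * (1 * k 0 + (-1) * k 1 + (-1) * k 2 + 1 * k 3 + (-1) * k 4 + 1 * k 5 + 1 * k 6 + 1 * k 7 + (-1) * k 8 + (-1) * k 9 + 1 * k 10 + 1 * k 11 + 1 * k 12 + (-1) * k 13 + 1 * k 14) + (-1) * (1 * k 0 + 1 * k 1 + (-1) * k 2 + (-1) * k 3 + 1 * k 4 + 1 * k 5 + (-1) * k 6 + 1 * k 7 + (-1) * k 8 + 1 * k 9 + 1 * k 10 + 1 * k 11 +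 (-1) * k 12 + (-1) * k 13 + 1 * k 14) + (1) * (1 * k 0 + (-1) * k 1 + (-1) * k 2 + (-1) * k 3 + 1 * k 4 + 1 * k 5 + 1 * k 6 + 1 * k 7 + 1 * k 8 + 1 * k 9 + 1 * k 10 + (-1) * k 11 + (-1) * k 12 + (-1) * k 13 + 1 * k 14) + (-1) * (1 * k 0 + 1 * k 1 + (-1) * k 2 + 1 * k 3 + (-1) * k 4 + 1 * k 5 + (-1) * k 6 + 1 * k 7 + 1 * k 8 + (-1) * k 9 + 1 * k 10 + (-1) * k 11 + 1 * k 12 + (-1) * k 13 + 1 * k 14) + (1) * (1 * k 0 + 1 * k 1 + 1 * k 2 + (-1) * k 3 + (-1) * k 4 + 1 * k 5 + 1 * k 6 + 1 * k 7 + (-1) * k 8 + (-1) * k 9 + 1 * k 10 + (-1) * k 11 + (-1) * k 12 + 1 * k 13 + 1 * k 14) + (-1) * (1 * k 0 + (-1) * k 1 + 1 * k 2 + 1 * k 3 + 1 * k 4 + 1 * k 5 + (-1) * k 6 + 1 * k 7 + (-1) * k 8 + 1 * k 9 + 1 * k 10 + (-1) * k 11 + 1 * k 12 + 1 * k 13 + 1 * k 14))" by (simp add: algebra_simps)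
  then have s6: "k 6 = 0" by (simp only: e0 e1 e2 e3 e4 e5 e6 e7; simp)
  have "8 * k 7 = 8 * k 0 + ((-1) * (1 * k 0 + 1 * k 1 + 1 * k 2 + 1 * k 3 + 1 * k 4 + 1 * k 5 + 1 * k 6 + 1 * k 7 + 1 * k 8 + 1 * k 9 + 1 * k 10 + 1 * k 11 + 1 * k 12 + 1 * k 13 + 1 * k 14) + (-7) * (1 * k 0 + (-1) * k 1 + 1 * k 2 + (-1) * k 3 + (-1) * k 4 + 1 * k 5 + (-1) * k 6 + 1 * k 7 + 1 * k 8 + (-1) * k 9 + 1 * k 10 + 1 * k 11 + (-1) * k 12 + 1 * k 13 + 1 * k 14) + (-1) * (1 * k 0 + 1 * k 1 + 1 * k 2 + (-1) * k 3 + (-1) * k 4 + 1 * k 5 + 1 * k 6 + 1 * k 7 + (-1) * k 8 + (-1) * k 9 + 1 * k 10 + (-1) * k 11 + (-1) * k 12 + 1 * k 13 + 1 * k 14) + (1) * (1 * k 0 + (-1) * k 1 + 1 * k 2 + 1 * k 3 + 1 * k 4 + 1 * k 5 + (-1) * k 6 + 1 * k 7 + (-1) * k 8 + 1 * k 9 + 1 * k 10 + (-1) * k 11 + 1 * k 12 + 1 * k 13 + 1 * k 14) + (-2) * (1 * k 1 + 1 * k 2 + 1 * k 3 + 2 * k 4 + 2 * k 5 + 2 * k 6 + 2 * k 7 + 2 * k 8 + 2 * k 9 + 2 * k 10 + 3 * k 11 + 3 * k 12 + 3 * k 13 + 4 * k 14) + (-2) * (1 * k 1 + 1 * k 2 +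 2 * k 3 + 1 * k 4 + 2 * k 5 + 2 * k 6 + 2 * k 7 + 3 * k 8 + 3 * k 9 + 4 * k 10 + 2 * k 11 + 2 * k 12 + 3 * k 13 + 2 * k 14) + (4) * (1 * k 1 + 2 * k 2 + 1 * k 3 + 1 * k 4 + 2 * k 5 + 3 * k 6 + 4 * k 7 + 2 * k 8 + 3 * k 9 + 2 * k 10 + 2 * k 11 + 3 * k 12 + 2 * k 13 + 2 * k 14) + (2) * ((-1) * k 1 + 1 * k 2 + (-1) * k 3 + (-2) * k 4 + 2 * k 5 + (-2) * k 6 + 2 * k 7 + 2 * k 8 + (-2) * k 9 + 2 * k 10 + 3 * k 11 + (-3) * k 12 + 3 * k 13 + 4 * k 14) + (2) * ((-1) * k 1 + 1 * k 2 + (-2) * k 3 + (-1) * k 4 + 2 * k 5 + (-2) * k 6 + 2 * k 7 + 3 * k 8 + (-3) * k 9 + 4 * k 10 + 2 * k 11 + (-2) * k 12 + 3 * k 13 + 2 * k 14))" by (simp add: algebra_simps)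
  then have s7: "k 7 = k 0" by (simp only: e0 e1 e6 e7 d0 d1 d2 d3 d4; simp)
  have "8 * k 8 = 0 * k 0 + ((1) * (1 * k 0 + 1 * k 1 + 1 * k 2 + 1 * k 3 + 1 * k 4 + 1 * k 5 + 1 * k 6 + 1 * k 7 + 1 * k 8 + 1 * k 9 + 1 * k 10 + 1 * k 11 + 1 * k 12 + 1 * k 13 + 1 * k 14) + (1) * (1 * k 0 + (-1) * k 1 + 1 * k 2 + (-1) * k 3 + (-1) * k 4 + 1 * k 5 + (-1) * k 6 + 1 * k 7 + 1 * k 8 + (-1) * k 9 + 1 * k 10 + 1 * k 11 + (-1) * k 12 + 1 * k 13 + 1 * k 14) + (-1) * (1 * k 0 + (-1) * k 1 + (-1) * k 2 + 1 * k 3 + (-1) * k 4 + 1 * k 5 + 1 * k 6 + 1 * k 7 + (-1) * k 8 + (-1) * k 9 + 1 * k 10 + 1 * k 11 + 1 * k 12 + (-1) * k 13 + 1 * k 14) + (-1) * (1 * k 0 + 1 * k 1 + (-1) * k 2 + (-1) * k 3 + 1 * k 4 + 1 * k 5 + (-1) * k 6 + 1 * k 7 + (-1) * k 8 + 1 * k 9 + 1 * k 10 + 1 * k 11 + (-1) * k 12 + (-1) * k 13 + 1 * k 14) + (1) * (1 * k 0 + (-1) * k 1 + (-1) * k 2 + (-1) * k 3 + 1 * k 4 + 1 * k 5 + 1 * k 6 + 1 * k 7 + 1 * k 8 + 1 * k 9 + 1 * k 10 + (-1) * k 11 + (-1) * k 12 + (-1) * k 13 + 1 * k 14) + (1) *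 (1 * k 0 + 1 * k 1 + (-1) * k 2 + 1 * k 3 + (-1) * k 4 + 1 * k 5 + (-1) * k 6 + 1 * k 7 + 1 * k 8 + (-1) * k 9 + 1 * k 10 + (-1) * k 11 + 1 * k 12 + (-1) * k 13 + 1 * k 14) + (-1) * (1 * k 0 + 1 * k 1 + 1 * k 2 + (-1) * k 3 + (-1) * k 4 + 1 * k 5 + 1 * k 6 + 1 * k 7 + (-1) * k 8 + (-1) * k 9 + 1 * k 10 + (-1) * k 11 + (-1) * k 12 + 1 * k 13 + 1 * k 14) + (-1) * (1 * k 0 + (-1) * k 1 + 1 * k 2 + 1 * k 3 + 1 * k 4 + 1 * k 5 + (-1) * k 6 + 1 * k 7 + (-1) * k 8 + 1 * k 9 + 1 * k 10 + (-1) * k 11 + 1 * k 12 + 1 * k 13 + 1 * k 14))" by (simp add: algebra_simps)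
  then have s8: "k 8 = 0" by (simp only: e0 e1 e2 e3 e4 e5 e6 e7; simp)
  have "8 * k 9 = 0 * k 0 + ((-3) * (1 * k 0 + 1 * k 1 + 1 * k 2 + 1 * k 3 + 1 * k 4 + 1 * k 5 + 1 * k 6 + 1 * k 7 + 1 * k 8 + 1 * k 9 + 1 * k 10 + 1 * k 11 + 1 * k 12 + 1 * k 13 + 1 * k 14) + (3) * (1 * k 0 + (-1) * k 1 + 1 * k 2 + (-1) * k 3 + (-1) * k 4 + 1 * k 5 + (-1) * k 6 + 1 * k 7 + 1 * k 8 + (-1) * k 9 + 1 * k 10 + 1 * k 11 + (-1) * k 12 + 1 * k 13 + 1 * k 14) + (-1) * (1 * k 0 + (-1) * k 1 + (-1) * k 2 + 1 * k 3 + (-1) * k 4 + 1 * k 5 + 1 * k 6 + 1 * k 7 + (-1) * k 8 + (-1) * k 9 + 1 * k 10 + 1 * k 11 + 1 * k 12 + (-1) * k 13 + 1 * k 14) + (1) * (1 * k 0 + 1 * k 1 + (-1) * k 2 + (-1) * k 3 + 1 * k 4 + 1 * k 5 + (-1) * k 6 + 1 * k 7 + (-1) * k 8 + 1 * k 9 + 1 * k 10 + 1 * k 11 + (-1) * k 12 + (-1) * k 13 + 1 * k 14) + (2) * (1 * k 1 + 1 * k 2 + 2 * k 3 + 1 * k 4 + 2 * k 5 + 2 * k 6 + 2 * k 7 + 3 * k 8 + 3 * k 9 + 4 * k 10 + 2 * k 11 + 2 * k 12 + 3 * k 13 + 2 * k 14) + (-2) * ((-1) * k 1 + 1 * k 2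 + (-2) * k 3 + (-1) * k 4 + 2 * k 5 + (-2) * k 6 + 2 * k 7 + 3 * k 8 + (-3) * k 9 + 4 * k 10 + 2 * k 11 + (-2) * k 12 + 3 * k 13 + 2 * k 14))" by (simp add: algebra_simps)
  then have s9: "k 9 = 0" by (simp only: e0 e1 e2 e3 d1 d4; simp)
  have "8 * k 10 = 8 * k 0 + ((-1) * (1 * k 0 + 1 * k 1 + 1 * k 2 + 1 * k 3 + 1 * k 4 + 1 * k 5 + 1 * k 6 + 1 * k 7 + 1 * k 8 + 1 * k 9 + 1 * k 10 + 1 * k 11 + 1 * k 12 + 1 * k 13 + 1 * k 14) + (-4) * (1 * k 0 + (-1) * k 1 + 1 * k 2 + (-1) * k 3 + (-1) * k 4 + 1 * k 5 + (-1) * k 6 + 1 * k 7 + 1 * k 8 + (-1) * k 9 + 1 * k 10 + 1 * k 11 + (-1) * k 12 + 1 * k 13 + 1 * k 14) + (-3) * (1 * k 0 + (-1) * k 1 + (-1) * k 2 + 1 * k 3 + (-1) * k 4 + 1 * k 5 + 1 * k 6 + 1 * k 7 + (-1) * k 8 + (-1) * k 9 + 1 * k 10 + 1 * k 11 + 1 * k 12 + (-1) * k 13 + 1 * k 14) + (-1) * (1 * k 0 + 1 * k 1 + (-1) * k 2 + 1 * k 3 + (-1) * k 4 + 1 * k 5 + (-1) * k 6 + 1 * k 7 + 1 * k 8 + (-1) * k 9 + 1 * k 10 + (-1) * k 11 + 1 * k 12 + (-1) * k 13 + 1 * k 14) + (1) * (1 * k 0 + (-1) * k 1 + 1 * k 2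 + 1 * k 3 + 1 * k 4 + 1 * k 5 + (-1) * k 6 + 1 * k 7 + (-1) * k 8 + 1 * k 9 + 1 * k 10 + (-1) * k 11 + 1 * k 12 + 1 * k 13 + 1 * k 14) + (-2) * (1 * k 1 + 1 * k 2 + 1 * k 3 + 2 * k 4 + 2 * k 5 + 2 * k 6 + 2 * k 7 + 2 * k 8 + 2 * k 9 + 2 * k 10 + 3 * k 11 + 3 * k 12 + 3 * k 13 + 4 * k 14) + (2) * (1 * k 1 + 1 * k 2 + 2 * k 3 + 1 * k 4 + 2 * k 5 + 2 * k 6 + 2 * k 7 + 3 * k 8 + 3 * k 9 + 4 * k 10 + 2 * k 11 + 2 * k 12 + 3 * k 13 + 2 * k 14) + (2) * ((-1) * k 1 + 1 * k 2 + (-2) * k 3 + (-1) * k 4 + 2 * k 5 + (-2) * k 6 + 2 * k 7 + 3 * k 8 + (-3) * k 9 + 4 * k 10 + 2 * k 11 + (-2) * k 12 + 3 * k 13 + 2 * k 14) + (2) * ((-1) * k 1 + (-1) * k 2 + 1 * k 3 + (-2) * k 4 + 2 * k 5 + 2 * k 6 + 2 * k 7 + (-2) * k 8 + (-2) * k 9 + 2 * k 10 + 3 * k 11 + 3 * k 12 + (-3) * k 13 + 4 * k 14))" by (simp add: algebra_simps)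
  then have s10: "k 10 = k 0" by (simp only: e0 e1 e2 e5 e7 d0 d1 d4 d5; simp)
  have "8 * k 11 = 0 * k 0 + ((1) * (1 * k 0 + 1 * k 1 + 1 * k 2 + 1 * k 3 + 1 * k 4 + 1 * k 5 + 1 * k 6 + 1 * k 7 + 1 * k 8 + 1 * k 9 + 1 * k 10 + 1 * k 11 + 1 * k 12 + 1 * k 13 + 1 * k 14) + (1) * (1 * k 0 + (-1) * k 1 + 1 * k 2 + (-1) * k 3 + (-1) * k 4 + 1 * k 5 + (-1) * k 6 + 1 * k 7 + 1 * k 8 + (-1) * k 9 + 1 * k 10 + 1 * k 11 + (-1) * k 12 + 1 * k 13 + 1 * k 14) + (1) * (1 * k 0 + (-1) * k 1 + (-1) * k 2 + 1 * k 3 + (-1) * k 4 + 1 * k 5 + 1 * k 6 + 1 * k 7 + (-1) * k 8 + (-1) * k 9 + 1 * k 10 + 1 * k 11 + 1 * k 12 + (-1) * k 13 + 1 * k 14) + (1) * (1 * k 0 + 1 * k 1 + (-1) * k 2 + (-1) * k 3 + 1 * k 4 + 1 * k 5 + (-1) * k 6 + 1 * k 7 + (-1) * k 8 + 1 * k 9 + 1 * k 10 + 1 * k 11 + (-1) * k 12 + (-1) * k 13 + 1 * k 14) + (-1) * (1 * k 0 + (-1) * k 1 + (-1) * k 2 + (-1) * k 3 + 1 * k 4 + 1 * k 5 + 1 * k 6 + 1 * k 7 + 1 * k 8 + 1 * k 9 + 1 * k 10 + (-1) * k 11 + (-1) * k 12 + (-1) * k 13 + 1 * k 14) + (-1) *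 (1 * k 0 + 1 * k 1 + (-1) * k 2 + 1 * k 3 + (-1) * k 4 + 1 * k 5 + (-1) * k 6 + 1 * k 7 + 1 * k 8 + (-1) * k 9 + 1 * k 10 + (-1) * k 11 + 1 * k 12 + (-1) * k 13 + 1 * k 14) + (-1) * (1 * k 0 + 1 * k 1 + 1 * k 2 + (-1) * k 3 + (-1) * k 4 + 1 * k 5 + 1 * k 6 + 1 * k 7 + (-1) * k 8 + (-1) * k 9 + 1 * k 10 + (-1) * k 11 + (-1) * k 12 + 1 * k 13 + 1 * k 14) + (-1) * (1 * k 0 + (-1) * k 1 + 1 * k 2 + 1 * k 3 + 1 * k 4 + 1 * k 5 + (-1) * k 6 + 1 * k 7 + (-1) * k 8 + 1 * k 9 + 1 * k 10 + (-1) * k 11 + 1 * k 12 + 1 * k 13 + 1 * k 14))" by (simp add: algebra_simps)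
  then have s11: "k 11 = 0" by (simp only: e0 e1 e2 e3 e4 e5 e6 e7; simp)
  have "8 * k 12 = 0 * k 0 + ((-3) * (1 * k 0 + 1 * k 1 + 1 * k 2 + 1 * k 3 + 1 * k 4 + 1 * k 5 + 1 * k 6 + 1 * k 7 + 1 * k 8 + 1 * k 9 + 1 * k 10 + 1 * k 11 + 1 * k 12 + 1 * k 13 + 1 * k 14) + (3) * (1 * k 0 + (-1) * k 1 + 1 * k 2 + (-1) * k 3 + (-1) * k 4 + 1 * k 5 + (-1) * k 6 + 1 * k 7 + 1 * k 8 + (-1) * k 9 + 1 * k 10 + 1 * k 11 + (-1) * k 12 + 1 * k 13 + 1 * k 14) + (-1) * (1 * k 0 + (-1) * k 1 + (-1) * k 2 + (-1) * k 3 + 1 * k 4 + 1 * k 5 + 1 * k 6 + 1 * k 7 + 1 * k 8 + 1 * k 9 + 1 * k 10 + (-1) * k 11 + (-1) * k 12 + (-1) * k 13 + 1 * k 14) + (1) * (1 * k 0 + 1 * k 1 + (-1) * k 2 + 1 * k 3 + (-1) * k 4 + 1 * k 5 + (-1) * k 6 + 1 * k 7 + 1 * k 8 + (-1) * k 9 + 1 * k 10 + (-1) * k 11 + 1 * k 12 + (-1) * k 13 + 1 * k 14) + (2) * (1 * k 1 + 1 * k 2 + 1 * k 3 + 2 * k 4 + 2 * k 5 + 2 * k 6 + 2 * k 7 + 2 * k 8 + 2 * k 9 + 2 * k 10 + 3 * k 11 + 3 * k 12 + 3 * k 13 + 4 * k 14) + (-2) * ((-1) * k 1 + 1 * k 2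 + (-1) * k 3 + (-2) * k 4 + 2 * k 5 + (-2) * k 6 + 2 * k 7 + 2 * k 8 + (-2) * k 9 + 2 * k 10 + 3 * k 11 + (-3) * k 12 + 3 * k 13 + 4 * k 14))" by (simp add: algebra_simps)
  then have s12: "k 12 = 0" by (simp only: e0 e1 e4 e5 d0 d3; simp)
  have "8 * k 13 = 0 * k 0 + ((-3) * (1 * k 0 + 1 * k 1 + 1 * k 2 + 1 * k 3 + 1 * k 4 + 1 * k 5 + 1 * k 6 + 1 * k 7 + 1 * k 8 + 1 * k 9 + 1 * k 10 + 1 * k 11 + 1 * k 12 + 1 * k 13 + 1 * k 14) + (3) * (1 * k 0 + (-1) * k 1 + (-1) * k 2 + 1 * k 3 + (-1) * k 4 + 1 * k 5 + 1 * k 6 + 1 * k 7 + (-1) * k 8 + (-1) * k 9 + 1 * k 10 + 1 * k 11 + 1 * k 12 + (-1) * k 13 + 1 * k 14) + (-1) * (1 * k 0 + (-1) * k 1 + (-1) * k 2 + (-1) * k 3 + 1 * k 4 + 1 * k 5 + 1 * k 6 + 1 * k 7 + 1 * k 8 + 1 * k 9 + 1 * k 10 + (-1) * k 11 + (-1) * k 12 + (-1) * k 13 + 1 * k 14) + (1) * (1 * k 0 + 1 * k 1 + 1 * k 2 + (-1) * k 3 + (-1) * k 4 + 1 * k 5 + 1 * k 6 + 1 * k 7 + (-1) * k 8 + (-1) * k 9 + 1 * k 10 + (-1) * k 11 + (-1) * k 12 + 1 * k 13 + 1 * k 14) + (2) * (1 * k 1 + 1 * k 2 + 1 * k 3 +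 2 * k 4 + 2 * k 5 + 2 * k 6 + 2 * k 7 + 2 * k 8 + 2 * k 9 + 2 * k 10 + 3 * k 11 + 3 * k 12 + 3 * k 13 + 4 * k 14) + (-2) * ((-1) * k 1 + (-1) * k 2 + 1 * k 3 + (-2) * k 4 + 2 * k 5 + 2 * k 6 + 2 * k 7 + (-2) * k 8 + (-2) * k 9 + 2 * k 10 + 3 * k 11 + 3 * k 12 + (-3) * k 13 + 4 * k 14))" by (simp add: algebra_simps)
  then have s13: "k 13 = 0" by (simp only: e0 e2 e4 e6 d0 d5; simp)
  have "8 * k 14 = 8 * k 0 + ((-1) * (1 * k 0 + 1 * k 1 + 1 * k 2 + 1 * k 3 + 1 * k 4 + 1 * k 5 + 1 * k 6 + 1 * k 7 + 1 * k 8 + 1 * k 9 + 1 * k 10 + 1 * k 11 + 1 * k 12 + 1 * k 13 + 1 * k 14) + (-4) * (1 * k 0 + (-1) * k 1 + 1 * k 2 + (-1) * k 3 + (-1) * k 4 + 1 * k 5 + (-1) * k 6 + 1 * k 7 + 1 * k 8 + (-1) * k 9 + 1 * k 10 + 1 * k 11 + (-1) * k 12 + 1 * k 13 + 1 * k 14) + (-4) * (1 * k 0 + (-1) * k 1 + (-1) * k 2 + 1 * k 3 + (-1) * k 4 + 1 * k 5 + 1 * k 6 + 1 * k 7 + (-1) * k 8 + (-1) * k 9 + 1 * k 10 + 1 * k 11 + 1 * k 12 + (-1) * k 13 + 1 * k 14) + (-1) * (1 * k 0 + 1 * k 1 + (-1) * k 2 + (-1) * k 3 + 1 * k 4 + 1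 * k 5 + (-1) * k 6 + 1 * k 7 + (-1) * k 8 + 1 * k 9 + 1 * k 10 + 1 * k 11 + (-1) * k 12 + (-1) * k 13 + 1 * k 14) + (1) * (1 * k 0 + (-1) * k 1 + (-1) * k 2 + (-1) * k 3 + 1 * k 4 + 1 * k 5 + 1 * k 6 + 1 * k 7 + 1 * k 8 + 1 * k 9 + 1 * k 10 + (-1) * k 11 + (-1) * k 12 + (-1) * k 13 + 1 * k 14) + (1) * (1 * k 0 + (-1) * k 1 + 1 * k 2 + 1 * k 3 + 1 * k 4 + 1 * k 5 + (-1) * k 6 + 1 * k 7 + (-1) * k 8 + 1 * k 9 + 1 * k 10 + (-1) * k 11 + 1 * k 12 + 1 * k 13 + 1 * k 14) + (2) * ((-1) * k 1 + 1 * k 2 + (-1) * k 3 + (-2) * k 4 + 2 * k 5 + (-2) * k 6 + 2 * k 7 + 2 * k 8 + (-2) * k 9 + 2 * k 10 + 3 * k 11 + (-3) * k 12 + 3 * k 13 + 4 * k 14) + (2) * ((-1) * k 1 + (-1) * k 2 + 1 * k 3 + (-2) * k 4 + 2 * k 5 + 2 * k 6 + 2 * k 7 + (-2) * k 8 + (-2) * k 9 + 2 * k 10 + 3 * k 11 + 3 * k 12 + (-3) * k 13 + 4 * k 14))" by (simp add: algebra_simps)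
  then have s14: "k 14 = k 0" by (simp only: e0 e1 e2 e3 e4 e7 d3 d5; simp)
  have "E k x y z w = k 0 * w^8 + (-4*k 0)*(x^2*y^2*z^2*w^2) + k 0*(x^2*y^2*z^4) + k 0*(x^2*y^4*z^2) + k 0*(x^4*y^2*z^2)"
    unfolding E_def s1 s2 s3 s4 s5 s6 s7 s8 s9 s10 s11 s12 s13 s14 by (simp add: algebra_simps)
  also have "\<dots> = k 0 * O41' x y z w"
    unfolding O41'_def by (simp add: algebra_simps)
  finally show ?thesis .
qed

lemma weight_step:
  fixes G :: form4
  assumes GN: "\<And>x y z w. G x y z w = NS C x y z w"
    and nn: "\<And>x y z w. 0 \<le> G x y z w"
    and le: "\<And>x y z w. G x y z w \<le> O41' x y z w"
    and bound: "\<And>x y z w t. 0 < t \<Longrightarrow> t \<le> 1 \<Longrightarrow> O41' (t^p*x) (t^q*y) (t^r*z) (t^s*w) \<le> Mf x y z w * t^8"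
    and s1: "1 \<le> s"
    and abcd: "a \<le> 8" "b \<le> 8" "c \<le> 8" "d \<le> 8" "p*a+q*b+r*c+s*d < 8"
  shows "C a b c d = 0"
proof -
  let ?n = "8*(p+q+r+s)"
  define j where "j = p*a+q*b+r*c+s*d"
  let ?D = "\<lambda>i a b c d. if p*a+q*b+r*c+s*d = i then C a b c d else 0"
  have z: "NS (?D j) x y z w = 0" for x y z w
  proof (rule order_lemma[where e="\<lambda>i. NS (?D i) x y z w" and n="?n" and M="Mf x y z w" and k=8])
    fix t :: real assume t: "0 < t" "t \<le> 1"
    have "(\<Sum>i\<le>?n. NS (?D i) x y z w * t^i) = NS C (t^p*x) (t^q*y) (t^r*z) (t^s*w)"
      unfolding NS_weight by (rule sum.cong) (simp_all add: mult.commute)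
    also have "\<dots> = G (t^p*x) (t^q*y) (t^r*z) (t^s*w)" by (simp add: GN)
    finally have eq: "(\<Sum>i\<le>?n. NS (?D i) x y z w * t^i) = G (t^p*x) (t^q*y) (t^r*z) (t^s*w)" .
    show "\<bar>\<Sum>i\<le>?n. NS (?D i) x y z w * t^i\<bar> \<le> Mf x y z w * t^8"
      unfolding eq using nn[of "t^p*x" "t^q*y" "t^r*z" "t^s*w"] le[of "t^p*x" "t^q*y" "t^r*z" "t^s*w"] bound[OF t, of x y z w]
      by simp
  next
    show "j < 8" using abcd j_def by simp
    show "j \<le> ?n" using abcd s1 j_def by simp
  qed
  have "?D j a b c d = 0" by (rule NS_zero[OF z abcd(1-4)])
  then show ?thesis by (simp add: j_def)
qed

lemma bnd1: "0 < t \<Longrightarrow> t \<le> 1 \<Longrightarrow> O41' (t^4*x) (t^0*y) (t^0*z) (t^1*w) \<le> (w^8 + x^2*y^2*z^2*(x^2+y^2+z^2)) * t^8"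
proof -
  assume t: "0 < t" "t \<le> 1"
  have A: "t^16 * (x^4*y^2*z^2) \<le> t^8 * (x^4*y^2*z^2)"
    using t by (intro mult_right_mono power_decreasing) auto
  have B: "0 \<le> t^10 * (x^2*y^2*z^2*w^2)" using t by simp
  have "O41' (t^4*x) (t^0*y) (t^0*z) (t^1*w) = t^8*w^8 + t^16 * (x^4*y^2*z^2) + t^8*(y^4*x^2*z^2) + t^8*(z^4*x^2*y^2) - 4 * (t^10 * (x^2*y^2*z^2*w^2))"
    unfolding O41'_def by (simp add: power_mult_distrib power_mult[symmetric] algebra_simps)
  also have "\<dots> \<le> (w^8 + x^2*y^2*z^2*(x^2+y^2+z^2)) * t^8"
  proof -
    have R: "(w^8 + x^2*y^2*z^2*(x^2+y^2+z^2)) * t^8 = t^8*w^8 + t^8 * (x^4*y^2*z^2) + t^8*(y^4*x^2*z^2) + t^8*(z^4*x^2*y^2)"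
      by (simp add: algebra_simps flip: power_add)
    show ?thesis using A B R by linarith
  qed
  finally show ?thesis .
qed

lemma O41_sym12: "O41' x y z w = O41' y x z w" unfolding O41'_def by (simp add: algebra_simps)
lemma O41_sym13: "O41' x y z w = O41' z y x w" unfolding O41'_def by (simp add: algebra_simps)

lemma bnd2: "0 < t \<Longrightarrow> t \<le> 1 \<Longrightarrow> O41' (t^0*x) (t^4*y) (t^0*z) (t^1*w) \<le> (w^8 + x^2*y^2*z^2*(x^2+y^2+z^2)) * t^8"
  using bnd1[of t y x z w] O41_sym12[of "t^0*x" "t^4*y" "t^0*z" "t^1*w"] by (simp add: ac_simps)

lemma bnd3: "0 < t \<Longrightarrow> t \<le> 1 \<Longrightarrow> O41' (t^0*x) (t^0*y) (t^4*z) (t^1*w) \<le> (w^8 + x^2*y^2*z^2*(x^2+y^2+z^2)) * t^8"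
  using bnd1[of t z y x w] O41_sym13[of "t^0*x" "t^0*y" "t^4*z" "t^1*w"] by (simp add: ac_simps)

lemma main:
  assumes GP: "G \<in> P4 8" and le: "\<And>x y z w. G x y z w \<le> O41' x y z w"
  shows "\<exists>l\<ge>0. G = (\<lambda>x y z w. l * O41' x y z w)"
proof -
  from GP obtain coef where rep: "\<And>x y z w. G x y z w =
          (\<Sum>a\<le>8. \<Sum>b\<le>8. \<Sum>c\<le>8. \<Sum>d\<le>8.
             if a + b + c + d = 8 then coef a b c d * x ^ a * y ^ b * z ^ c * w ^ d else 0)"
    and nn: "\<And>x y z w. 0 \<le> G x y z w"
    unfolding P4_def is_form4_def by auto
  define C where "C a b c d = (if a+b+c+d = (8::nat) then coef a b c d else 0)" for a b c d
  have GN: "G x y z w = NS C x y z w" for x y z w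
    unfolding rep NS_def C_def by (intro sum.cong refl) simp
  let ?M = "\<lambda>x y z w. w^8 + x^2*y^2*z^2*(x^2+y^2+z^2)"
  have w1: "C a b c d = 0" if "a \<le> 8" "b \<le> 8" "c \<le> 8" "d \<le> 8" "4*a+0*b+0*c+1*d < 8" for a b c d
    by (rule weight_step[where G=G and Mf="?M", OF GN nn le bnd1 _ that]) auto
  have w2: "C a b c d = 0" if "a \<le> 8" "b \<le> 8" "c \<le> 8" "d \<le> 8" "0*a+4*b+0*c+1*d < 8" for a b c d
    by (rule weight_step[where G=G and Mf="?M", OF GN nn le bnd2 _ that]) auto
  have w3: "C a b c d = 0" if "a \<le> 8" "b \<le> 8" "c \<le> 8" "d \<le> 8" "0*a+0*b+4*c+1*d < 8" for a b c d
    by (rule weight_step[where G=G and Mf="?M", OF GN nn le bnd3 _ that]) auto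
  have supp: "C a b c d = 0" if "a \<le> 8" "b \<le> 8" "c \<le> 8" "d \<le> 8" "(a,b,c,d) \<notin> S15" for a b c d
  proof (cases "a+b+c+d = 8")
    case False then show ?thesis by (simp add: C_def)
  next
    case True
    show ?thesis
    proof (cases "4*a+d < 8 \<or> 4*b+d < 8 \<or> 4*c+d < 8")
      case True then show ?thesis using w1[OF that(1-4)] w2[OF that(1-4)] w3[OF that(1-4)] by auto
    next
      case False then have "(a,b,c,d) \<in> S15" using supp_arith[OF True] by simp
      then show ?thesis using that by simp
    qed
  qed
  define k where "k i = [C 0 0 0 8, C 1 1 1 5, C 1 1 2 4, C 1 2 1 4, C 2 1 1 4, C 2 2 2 2, C 2 2 3 1, C 2 2 4 0, C 2 3 2 1, C 2 3 3 0, C 2 4 2 0, C 3 2 2 1, C 3 2 3 0, C 3 3 2 0, C 4 2 2 0] ! i" for i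
  have Ek: "G x y z w = E k x y z w" for x y z w
  proof -
    have "G x y z w = (\<Sum>(a,b,c,d)\<in>S15. C a b c d * x^a*y^b*z^c*w^d)"
      unfolding GN by (rule NS_support) (rule supp)
    also have "\<dots> = E k x y z w"
      unfolding S15_def E_def k_def by (simp add: algebra_simps)
    finally show ?thesis .
  qed
  have v0: "E k 1 1 1 1 = 0" using Ek[of 1 1 1 1] nn[of 1 1 1 1] le[of 1 1 1 1] by (simp add: O41'_def)
  have v1: "E k 1 1 (-1) 1 = 0" using Ek[of 1 1 "-1" 1] nn[of 1 1 "-1" 1] le[of 1 1 "-1" 1] by (simp add: O41'_def)
  have v2: "E k 1 (-1) 1 1 = 0" using Ek[of 1 "-1" 1 1] nn[of 1 "-1" 1 1] le[of 1 "-1" 1 1] by (simp add: O41'_def)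
  have v3: "E k 1 (-1) (-1) 1 = 0" using Ek[of 1 "-1" "-1" 1] nn[of 1 "-1" "-1" 1] le[of 1 "-1" "-1" 1] by (simp add: O41'_def)
  have v4: "E k (-1) 1 1 1 = 0" using Ek[of "-1" 1 1 1] nn[of "-1" 1 1 1] le[of "-1" 1 1 1] by (simp add: O41'_def)
  have v5: "E k (-1) 1 (-1) 1 = 0" using Ek[of "-1" 1 "-1" 1] nn[of "-1" 1 "-1" 1] le[of "-1" 1 "-1" 1] by (simp add: O41'_def)
  have v6: "E k (-1) (-1) 1 1 = 0" using Ek[of "-1" "-1" 1 1] nn[of "-1" "-1" 1 1] le[of "-1" "-1" 1 1] by (simp add: O41'_def)
  have v7: "E k (-1) (-1) (-1) 1 = 0" using Ek[of "-1" "-1" "-1" 1] nn[of "-1" "-1" "-1" 1] le[of "-1" "-1" "-1" 1] by (simp add: O41'_def)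
  have lin: "E k x y z w = k 0 * O41' x y z w" for x y z w
    by (rule lin_alg[OF _ v0 v1 v2 v3 v4 v5 v6 v7]) (simp add: Ek[symmetric] nn)
  have k0: "k 0 \<ge> 0" using nn[of 0 0 0 1] Ek[of 0 0 0 1] lin[of 0 0 0 1] by (simp add: O41'_def)
  show ?thesis by (intro exI[of _ "k 0"] conjI k0 ext) (simp add: Ek lin)
qed

lemma O41_nonneg: "0 \<le> O41' x y z w"
proof -
  define P where "P = root 3 (x^2)"
  define Q where "Q = root 3 (y^2)"
  define R where "R = root 3 (z^2)"
  define A where "A = w^2"
  define B where "B = P*Q*R"
  have P0: "P \<ge> 0" "Q \<ge> 0" "R \<ge> 0" unfolding P_def Q_def R_def by simp_all
  have hx: "x^2 = P^3" unfolding P_def by (simp add: real_root_pow_pos2)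
  have hy: "y^2 = Q^3" unfolding Q_def by (simp add: real_root_pow_pos2)
  have hz: "z^2 = R^3" unfolding R_def by (simp add: real_root_pow_pos2)
  have "O41' x y z w = A^4 + (x^2)^2*y^2*z^2 + (y^2)^2*x^2*z^2 + (z^2)^2*x^2*y^2 - 4*x^2*y^2*z^2*A"
    unfolding O41'_def A_def by (simp flip: power_mult)
  also have "\<dots> = A^4 + (P^3)^2*Q^3*R^3 + (Q^3)^2*P^3*R^3 + (R^3)^2*P^3*Q^3 - 4*P^3*Q^3*R^3*A"
    unfolding hx hy hz ..
  also have "\<dots> = (A-B)^2*((A+B)^2+2*B^2) + B^3 * ((P+Q+R)*((P-Q)^2+(Q-R)^2+(R-P)^2)/2)"
    unfolding B_def by (simp add: field_simps power2_eq_square power3_eq_cube power4_eq_xxxx)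
  finally have eq: "O41' x y z w = (A-B)^2*((A+B)^2+2*B^2) + B^3 * ((P+Q+R)*((P-Q)^2+(Q-R)^2+(R-P)^2)/2)" .
  have "0 \<le> B" unfolding B_def using P0 by simp
  moreover have "0 \<le> P+Q+R" using P0 by simp
  ultimately show ?thesis unfolding eq by (intro add_nonneg_nonneg mult_nonneg_nonneg) auto
qed

definition Fc :: "nat \<Rightarrow> nat \<Rightarrow> nat \<Rightarrow> nat \<Rightarrow> real" where
  "Fc a b c d = (if (a,b,c,d) = (0,0,0,8) then 1 else if (a,b,c,d) = (4,2,2,0) then 1
     else if (a,b,c,d) = (2,4,2,0) then 1 else if (a,b,c,d) = (2,2,4,0) then 1
     else if (a,b,c,d) = (2,2,2,2) then -4 else 0)"

lemma O41_form: "is_form4 8 O41'"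
  unfolding is_form4_def
proof (intro exI[of _ Fc] allI)
  fix x y z w :: real
  define D where "D a b c d = (if a+b+c+d = (8::nat) then Fc a b c d else 0)" for a b c d
  have "(\<Sum>a\<le>8. \<Sum>b\<le>8. \<Sum>c\<le>8. \<Sum>d\<le>8.
             if a + b + c + d = 8 then Fc a b c d * x ^ a * y ^ b * z ^ c * w ^ d else 0) = NS D x y z w"
    unfolding NS_def D_def by (intro sum.cong refl) simp
  also have "\<dots> = (\<Sum>(a,b,c,d)\<in>S15. D a b c d * x^a*y^b*z^c*w^d)"
    by (rule NS_support) (auto simp: D_def Fc_def S15_def)
  also have "\<dots> = O41' x y z w"
    unfolding S15_def D_def Fc_def O41'_def by (simp add: algebra_simps)
  finally show "O41' x y z w = (\<Sum>a\<le>8. \<Sum>b\<le>8. \<Sum>c\<le>8. \<Sum>d\<le>8.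
             if a + b + c + d = 8 then Fc a b c d * x ^ a * y ^ b * z ^ c * w ^ d else 0)" by simp
qed

theorem proposition1:
  shows "extremal_in (P4 8) O41'"
  unfolding extremal_in_def
proof (intro conjI ballI impI)
  show "O41' \<in> P4 8" unfolding P4_def using O41_form O41_nonneg by auto
next
  fix F1 F2 assume F1: "F1 \<in> P4 8" and F2: "F2 \<in> P4 8"
    and eq: "O41' = (\<lambda>x y z w. F1 x y z w + F2 x y z w)"
  have n1: "0 \<le> F1 x y z w" and n2: "0 \<le> F2 x y z w" for x y z w
    using F1 F2 unfolding P4_def by auto
  have e: "O41' x y z w = F1 x y z w + F2 x y z w" for x y z w using eq by meson
  have l1: "F1 x y z w \<le> O41' x y z w" for x y z w using e[of x y z w] n2[of x y z w] by simp
  have l2: "F2 x y z w \<le> O41' x y z w" for x y z w using e[of x y z w] n1[of x y z w] by simp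
  obtain a1 where "a1 \<ge> 0" "F1 = (\<lambda>x y z w. a1 * O41' x y z w)" using main[OF F1 l1] by blast
  moreover obtain a2 where "a2 \<ge> 0" "F2 = (\<lambda>x y z w. a2 * O41' x y z w)" using main[OF F2 l2] by blast
  ultimately show "\<exists>l1 l2. 0 \<le> l1 \<and> 0 \<le> l2 \<and> F1 = (\<lambda>x y z w. l1 * O41' x y z w) \<and> F2 = (\<lambda>x y z w. l2 * O41' x y z w)"
    by blast
qed

end
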